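(* Let $\alpha$ be a composition, $w\in CRHW_n$ with $w(\alpha)=\beta\neq0$, $\tau=\tau_w$, and let $j\ge1$ belong to $\mathrm{supp}(w)$ but not be its maximum. Then every entry of $\tau$ in column $j$ other than the greatest one is strictly smaller than the smallest entry of $\tau$ in column $j+1$.
   Context: Box-adding operators on compositions $\alpha=(\alpha_1,\dots,\alpha_k)$: $\mathfrak t_1(\alpha)=(1,\alpha_1,\dots,\alpha_k)$ (a new row on top); for $i\ge2$, $\mathfrak t_i(\alpha)$ increases the leftmost part equal to $i-1$ by $1$ (adding a box in column $i$), and is $0$ if there is no such part; $\mathfrak t_i(0)=0$. A word $w=\mathfrak t_{i_1}\cdots\mathfrak t_{i_n}$ acts by $w(\alpha)=\mathfrak t_{i_1}(\cdots\mathfrak t_{i_n}(\alpha))$. It is a reverse hookword if $i_1\le\cdots\le i_{k+1}>i_{k+2}>\cdots>i_n$ for some $0\le k\le n-1$. $\mathrm{supp}(w)=\{i_1,\dots,i_n\}$; $w$ is connected if $\mathrm{supp}(w)$ is a set of consecutive integers; $CRHW_n$ is the set of connected reverse hookwords of length $n$. If $w(\alpha)=\beta\ne0$, applying $\mathfrak t_{i_n},\dots,\mathfrak t_{i_1}$ successively adds one box at each step (the box added by $\mathfrak t_{i_m}$ is in column $i_m$); $\tau_w$ is the filling of the set of added boxes in which the box added by $\mathfrak t_{i_m}$ has entry $m$. *)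

theory Defs
  imports Main
begin

definition composition :: "nat list \<Rightarrow> bool" where
  "composition a \<longleftrightarrow> (\<forall>x\<in>set a. 0 < x)"

text \<open>Result None encodes 0.
  On success we also return the added box as (row, column), where rows are
  counted from the bottom (last part = row 0), so that adding a new top row
  does not shift the coordinates of previously added boxes.\<close>
definition tstep :: "nat \<Rightarrow> nat list \<Rightarrow> (nat list \<times> (nat \<times> nat)) option" where
  "tstep i a =
     (if i = 1 then Some (1 # a, (length a, 1))
      else if 2 \<le> i \<and> (i - 1) \<in> set a then
        (let r = LEAST r. r < length a \<and> a ! r = i - 1
         in Some (a[r := i], (length a - 1 - r, i)))
      else None)"

fun process :: "(nat \<times> nat) list \<Rightarrow> nat list \<Rightarrow> (nat list \<times> (nat \<times> nat \<times> nat) list) option" where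
  "process [] a = Some (a, [])"
| "process ((i, m) # rest) a =
     (case tstep i a of
        None \<Rightarrow> None
      | Some (a', (r, c)) \<Rightarrow>
          (case process rest a' of
             None \<Rightarrow> None
           | Some (b, cells) \<Rightarrow> Some (b, (r, c, m) # cells)))"

text \<open>The word w = t_{i_1} ... t_{i_n} is the list [i_1,...,i_n]; it acts by
  applying t_{i_n} first, and the box added by t_{i_m} gets entry m.
  Result: Some (beta, tau) with beta = w(alpha) and tau the filling tau_w
  (set of (row, column, entry)), or None if w(alpha) = 0.\<close>
definition word_apply :: "nat list \<Rightarrow> nat list \<Rightarrow> (nat list \<times> (nat \<times> nat \<times> nat) list) option" where
  "word_apply w a = process (rev (zip w [1..<length w + 1])) a"

definition reverse_hookword :: "nat list \<Rightarrow> bool" where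
  "reverse_hookword w \<longleftrightarrow> (\<forall>i\<in>set w. 1 \<le> i) \<and>
     (\<exists>k. k < length w \<and> sorted_wrt (\<le>) (take (k + 1) w) \<and> sorted_wrt (>) (drop k w))"

definition connected_word :: "nat list \<Rightarrow> bool" where
  "connected_word w \<longleftrightarrow> (\<exists>a b. set w = {a..b})"

definition CRHW :: "nat \<Rightarrow> nat list set" where
  "CRHW n = {w. length w = n \<and> reverse_hookword w \<and> connected_word w}"

definition col_entries :: "(nat \<times> nat \<times> nat) list \<Rightarrow> nat \<Rightarrow> nat set" where
  "col_entries tau j = {m. \<exists>r. (r, j, m) \<in> set tau}"

end

theory Submission
  imports Defs
begin

lemma tstep_col: "tstep i a = Some (a', (r, c)) \<Longrightarrow> c = i"
  unfolding tstep_def by (auto simp: Let_def split: if_splits)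

lemma process_cells:
  "process ps a = Some (b, cells) \<Longrightarrow> (r, c, m) \<in> set cells \<Longrightarrow> (c, m) \<in> set ps"
proof (induction ps arbitrary: a b cells)
  case Nil then show ?case by simp
next
  case (Cons p ps)
  obtain i k where p: "p = (i, k)" by (cases p)
  from Cons.prems p obtain a' r' c' b' cells' where
    t: "tstep i a = Some (a', (r', c'))" and pr: "process ps a' = Some (b', cells')"
    and eq: "b = b'" "cells = (r', c', k) # cells'"
    by (auto split: option.splits prod.splits)
  have "c' = i" using tstep_col[OF t] .
  with Cons.prems(2) eq Cons.IH[OF pr] p show ?case by auto
qed

lemma cells_pos:
  assumes "word_apply w a = Some (b, tau)" "(r, c, m) \<in> set tau"
  shows "\<exists>i<length w. c = w ! i \<and> m = Suc i"
proof -
  have "(c, m) \<in> set (zip w [1..<length w + 1])"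
    using process_cells[OF assms(1)[unfolded word_apply_def] assms(2)] by simp
  moreover have "[1..<length w + 1] = map Suc [0..<length w]" by (simp add: map_Suc_upt)
  ultimately show ?thesis by (auto simp: set_zip)
qed

lemma hook_noforbid:
  assumes "reverse_hookword w" "p < q" "q < r" "r < length w"
    and "w ! p > w ! q" "w ! q = w ! r"
  shows False
proof -
  obtain k where k: "k < length w" "sorted_wrt (\<le>) (take (k + 1) w)"
    "sorted_wrt (>) (drop k w)" using assms(1) unfolding reverse_hookword_def by blast
  show False
  proof (cases "q \<le> k")
    case True
    have "w ! p \<le> w ! q"
      using k(2) True assms unfolding sorted_wrt_iff_nth_less by force
    then show False using True assms by simp
  next
    case False
    have A: "\<forall>i j. i < j \<longrightarrow> j < length w - k \<longrightarrow> w ! (k + j) < w ! (k + i)"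
      using k(3) unfolding sorted_wrt_iff_nth_less by simp
    have "w ! (k + (r - k)) < w ! (k + (q - k))"
      using A[rule_format, of "q - k" "r - k"] False assms by (simp add: diff_less_mono)
    then have "w ! r < w ! q" using False assms by simp
    then show False using False assms by simp
  qed
qed

theorem mainTheorem10:
  fixes \<alpha> \<beta> w :: "nat list" and n j :: nat and \<tau> :: "(nat \<times> nat \<times> nat) list"
  assumes "composition \<alpha>"
    and "w \<in> CRHW n"
    and "word_apply w \<alpha> = Some (\<beta>, \<tau>)"
    and "1 \<le> j" and "j \<in> set w" and "j \<noteq> Max (set w)"
  shows "\<forall>x\<in>col_entries \<tau> j. x \<noteq> Max (col_entries \<tau> j) \<longrightarrow>
           (\<forall>y\<in>col_entries \<tau> (j + 1). x < y)"
proof (intro ballI impI)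
  fix x y
  assume x: "x \<in> col_entries \<tau> j" and xm: "x \<noteq> Max (col_entries \<tau> j)"
    and y: "y \<in> col_entries \<tau> (j + 1)"
  have rh: "reverse_hookword w" using assms(2) by (simp add: CRHW_def)
  have fin: "finite (col_entries \<tau> j)"
  proof -
    have "col_entries \<tau> j \<subseteq> (\<lambda>(r, c, m). m) ` set \<tau>"
      unfolding col_entries_def by force
    then show ?thesis by (rule finite_subset) simp
  qed
  define z where "z = Max (col_entries \<tau> j)"
  have zin: "z \<in> col_entries \<tau> j" unfolding z_def using fin x by (auto intro: Max_in)
  have "x \<le> z" unfolding z_def using fin x by simp
  with xm have xz: "x < z" unfolding z_def by simp
  from x obtain i1 where i1: "i1 < length w" "j = w ! i1" "x = Suc i1"
    using cells_pos[OF assms(3)] unfolding col_entries_def by blast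
  from zin obtain i2 where i2: "i2 < length w" "j = w ! i2" "z = Suc i2"
    using cells_pos[OF assms(3)] unfolding col_entries_def by blast
  from y obtain i3 where i3: "i3 < length w" "j + 1 = w ! i3" "y = Suc i3"
    using cells_pos[OF assms(3)] unfolding col_entries_def by blast
  show "x < y"
  proof (rule ccontr)
    assume "\<not> x < y"
    then have "i3 < i1" using i1 i3 by (cases "i3 = i1") auto
    then show False using hook_noforbid[OF rh, of i3 i1 i2] i1 i2 i3 xz by simp
  qed
qed

end
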